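(* Fix $\varepsilon>0$ and a request sequence in which every request has infinite duration. For a VNF $v$, a node $i$ and a latency range $L_j$, let $\Lambda^v_{i,j}$ be the total load of all jobs $(r,v)$ associated with $L_j$ that c-REShare$(\varepsilon)$ handles in node $i$. Then the number of VMs used by c-REShare$(\varepsilon)$ to handle $\Lambda^v_{i,j}$ is at most $\frac{2\Lambda^v_{i,j}}{\lambda_{\min}(1+\varepsilon)^j}+1$.
   Context: Network: a layered graph of nodes (datacenters); a node is at layer $\ell\ge0$ if its distance from the closest leaf is $\ell$. Every node can host arbitrarily many virtual machines (VMs). Each VM $b$ runs exactly one VNF $v$ from a finite set $\mathcal V$, has maximum computing capability $\bar\mu>0$ and allocated capability $\mu_b\le\bar\mu$. Each VNF $v$ has complexity $\theta_v\in(0,1]$. Requests: requests $r$ arrive online; each has a set $\mathcal V_r\subseteq\mathcal V$ of VNFs, arrival time, duration $\tau_r$, traffic load $\lambda_r\ge\lambda_{\min}$ where $\lambda_{\min}=\inf_r\lambda_r>0$ is known in advance, end-to-end delay target $D_r$. For $v\in\mathcal V_r$, $(r,v)$ is a job. For a VM $b$ running $v$, $\Lambda(b)$ is the total load of the jobs on $b$, and each job on $b$ experiences processing latency $1/(\mu_b-\theta_v\Lambda(b))$. Forwarding latency from a leaf to layer $\ell$ is $d_\ell$, strictly increasing in $\ell$. Fair delay allocation: $M_{r,v}=1/(\bar\mu-\theta_v\lambda_r)$; $\ell^*(r)$ is the highest layer $\ell$ with $d_\ell+\sum_{v\in\mathcal V_r}M_{r,v}\le D_r$; $D_r^v=\frac{M_{r,v}}{\sum_{u\in\mathcal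 V_r}M_{r,u}}(D_r-d_{\ell^*(r)})$. Latency ranges: for $\varepsilon>0$, $L_0=[\frac{1}{\bar\mu-\lambda_{\min}},\frac{1}{\bar\mu-\lambda_{\min}(1+\varepsilon)}]$, $L_j=(\frac{1}{\bar\mu-\lambda_{\min}(1+\varepsilon)^j},\frac{1}{\bar\mu-\lambda_{\min}(1+\varepsilon)^{j+1}}]$ for $j\ge1$ (indices with $\lambda_{\min}(1+\varepsilon)^{j+1}<\bar\mu$); job $(r,v)$ is associated with $L_j$ if $D_r^v\in L_j$. Algorithm c-REShare$(\varepsilon)$: on arrival of $r$, compute $\ell^*(r)$ and choose a node $i^*$ at layer $\ell^*(r)$. For each $v\in\mathcal V_r$, with $j$ such that $D_r^v\in L_j$: a VM $b$ in $i^*$ running $v$ and hosting jobs associated with $L_j$ is viable if $\frac{1}{\bar\mu-\theta_v(\Lambda(b)+\lambda_r)}\le D_r^v$ and $\frac{1}{\bar\mu-\theta_v(\Lambda(b)+\lambda_r)}\le D_{r'}^v$ for every job $(r',v)$ already on $b$. If viable VMs exist, $(r,v)$ is placed on the viable VM with the largest $\Lambda(b)$, whose capability is set to $\theta_v\Lambda(b)+1/\min_{(r',v)\in b}D_{r'}^v$ (including the new job); otherwise a new VM running $v$ is opened in $i^*$ with capability $\theta_v\lambda_r+1/D_r^v$ and $(r,v)$ is placed on it. *)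

theory Defs
  imports Complex_Main
begin

text \<open>Static parameters of the network and of the VNFs.  The layered graph is only
  used through the layer of each node, so it is represented by the (finite) set of
  nodes and the layer function.\<close>

record ('n, 'v) sys =
  nodes :: "'n set"
  layer :: "'n \<Rightarrow> nat"
  fwd   :: "nat \<Rightarrow> real"       \<comment> \<open>forwarding latency d_l from a leaf to layer l\<close>
  cplx  :: "'v \<Rightarrow> real"
  mubar :: real                \<comment> \<open>maximum computing capability of a VM\<close>
  lmin  :: real

text \<open>A request (infinite duration; arrival order is the index in the request
  sequence).\<close>

record 'v req =
  vnfs   :: "'v set"
  load   :: real
  target :: real

text \<open>A VM: hosting node, VNF it runs, latency range index of its jobs,
  allocated capability, and its jobs, each given by (load, delay budget D_r^v).\<close>

record ('n, 'v) vm =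
  vm_node  :: 'n
  vm_vnf   :: 'v
  vm_range :: nat
  vm_cap   :: real
  vm_jobs  :: "(real \<times> real) list"

definition vm_load :: "('n, 'v) vm \<Rightarrow> real" where
  "vm_load b = sum_list (map fst (vm_jobs b))"

definition Mrv :: "('n, 'v) sys \<Rightarrow> 'v req \<Rightarrow> 'v \<Rightarrow> real" where
  "Mrv s r v = 1 / (mubar s - cplx s v * load r)"

definition sumM :: "('n, 'v) sys \<Rightarrow> 'v req \<Rightarrow> real" where
  "sumM s r = (\<Sum>u\<in>vnfs r. Mrv s r u)"

definition feasible_layers :: "('n, 'v) sys \<Rightarrow> 'v req \<Rightarrow> nat set" where
  "feasible_layers s r = {l \<in> layer s ` nodes s. fwd s l + sumM s r \<le> target r}"

definition lstar :: "('n, 'v) sys \<Rightarrow> 'v req \<Rightarrow> nat" where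
  "lstar s r = Max (feasible_layers s r)"

definition Drv :: "('n, 'v) sys \<Rightarrow> 'v req \<Rightarrow> 'v \<Rightarrow> real" where
  "Drv s r v = Mrv s r v / sumM s r * (target r - fwd s (lstar s r))"

definition in_range :: "('n, 'v) sys \<Rightarrow> real \<Rightarrow> nat \<Rightarrow> real \<Rightarrow> bool" where
  "in_range s eps j x \<longleftrightarrow>
     lmin s * (1 + eps) ^ (j + 1) < mubar s \<and>
     (if j = 0 then 1 / (mubar s - lmin s) \<le> x
      else 1 / (mubar s - lmin s * (1 + eps) ^ j) < x) \<and>
     x \<le> 1 / (mubar s - lmin s * (1 + eps) ^ (j + 1))"

text \<open>The latency 1/(mubar - theta(Lambda+lam)) is only meaningful (finite) when the
  denominator is positive, which is required explicitly.\<close>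

definition viable ::
  "('n, 'v) sys \<Rightarrow> 'n \<Rightarrow> 'v \<Rightarrow> nat \<Rightarrow> real \<Rightarrow> real \<Rightarrow> ('n, 'v) vm \<Rightarrow> bool" where
  "viable s i v j lam D b \<longleftrightarrow>
     vm_node b = i \<and> vm_vnf b = v \<and> vm_range b = j \<and>
     0 < mubar s - cplx s v * (vm_load b + lam) \<and>
     1 / (mubar s - cplx s v * (vm_load b + lam)) \<le> D \<and>
     (\<forall>(l', D')\<in>set (vm_jobs b). 1 / (mubar s - cplx s v * (vm_load b + lam)) \<le> D')"

definition add_job :: "('n, 'v) sys \<Rightarrow> real \<Rightarrow> real \<Rightarrow> ('n, 'v) vm \<Rightarrow> ('n, 'v) vm" where
  "add_job s lam D b =
     (let js = vm_jobs b @ [(lam, D)] in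
      b\<lparr>vm_jobs := js,
        vm_cap := cplx s (vm_vnf b) * sum_list (map fst js) + 1 / Min (snd ` set js)\<rparr>)"

definition new_vm :: "('n, 'v) sys \<Rightarrow> 'n \<Rightarrow> 'v \<Rightarrow> nat \<Rightarrow> real \<Rightarrow> real \<Rightarrow> ('n, 'v) vm" where
  "new_vm s i v j lam D =
     \<lparr>vm_node = i, vm_vnf = v, vm_range = j,
      vm_cap = cplx s v * lam + 1 / D, vm_jobs = [(lam, D)]\<rparr>"

text \<open>Placement of one job (node i, VNF v, range j, load lam, budget D) into the
  current list of VMs.  Ties among viable VMs of maximal load are broken arbitrarily
  (nondeterministically).\<close>

definition place_job ::
  "('n, 'v) sys \<Rightarrow> ('n, 'v) vm list \<Rightarrow> 'n \<Rightarrow> 'v \<Rightarrow> nat \<Rightarrow> real \<Rightarrow> real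
     \<Rightarrow> ('n, 'v) vm list \<Rightarrow> bool" where
  "place_job s S i v j lam D S' \<longleftrightarrow>
     (\<exists>k < length S. viable s i v j lam D (S ! k) \<and>
        (\<forall>k' < length S. viable s i v j lam D (S ! k') \<longrightarrow> vm_load (S ! k') \<le> vm_load (S ! k)) \<and>
        S' = S[k := add_job s lam D (S ! k)])
   \<or> ((\<forall>k < length S. \<not> viable s i v j lam D (S ! k)) \<and> S' = S @ [new_vm s i v j lam D])"

inductive place_all ::
  "('n, 'v) sys \<Rightarrow> real \<Rightarrow> 'v req \<Rightarrow> 'n \<Rightarrow> ('n, 'v) vm list \<Rightarrow> 'v list
     \<Rightarrow> ('n, 'v) vm list \<Rightarrow> bool"
  for s eps r i where
  nil: "place_all s eps r i S [] S"
| cons: "in_range s eps j (Drv s r v) \<Longrightarrow>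
         place_job s S i v j (load r) (Drv s r v) S' \<Longrightarrow>
         place_all s eps r i S' vs S'' \<Longrightarrow>
         place_all s eps r i S (v # vs) S''"

definition handle ::
  "('n, 'v) sys \<Rightarrow> real \<Rightarrow> 'v req \<Rightarrow> ('n, 'v) vm list \<Rightarrow> ('n, 'v) vm list \<Rightarrow> bool" where
  "handle s eps r S S' \<longleftrightarrow>
     feasible_layers s r \<noteq> {} \<and>
     (\<exists>i vs. i \<in> nodes s \<and> layer s i = lstar s r \<and> distinct vs \<and> set vs = vnfs r \<and>
        place_all s eps r i S vs S')"

text \<open>States reachable after the first n requests of the sequence req (all requests
  have infinite duration, so no job ever leaves).\<close>

inductive reach ::
  "('n, 'v) sys \<Rightarrow> real \<Rightarrow> (nat \<Rightarrow> 'v req) \<Rightarrow> nat \<Rightarrow> ('n, 'v) vm list \<Rightarrow> bool"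
  for s eps req where
  init: "reach s eps req 0 []"
| step: "reach s eps req n S \<Longrightarrow> handle s eps (req n) S S' \<Longrightarrow> reach s eps req (Suc n) S'"

definition vms_of :: "('n, 'v) vm list \<Rightarrow> 'n \<Rightarrow> 'v \<Rightarrow> nat \<Rightarrow> ('n, 'v) vm list" where
  "vms_of S i v j = filter (\<lambda>b. vm_node b = i \<and> vm_vnf b = v \<and> vm_range b = j) S"

definition Lam :: "('n, 'v) vm list \<Rightarrow> 'n \<Rightarrow> 'v \<Rightarrow> nat \<Rightarrow> real" where
  "Lam S i v j = sum_list (map vm_load (vms_of S i v j))"

end

theory Submission
  imports Defs
begin

definition Rel :: "('n, 'v) sys \<Rightarrow> real \<Rightarrow> ('n, 'v) vm \<Rightarrow> ('n, 'v) vm \<Rightarrow> bool" where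
  "Rel s eps b b' \<longleftrightarrow> (vm_node b = vm_node b' \<and> vm_vnf b = vm_vnf b' \<and> vm_range b = vm_range b'
     \<longrightarrow> lmin s * (1 + eps) ^ vm_range b' < vm_load b + vm_load b')"

definition Inv :: "('n, 'v) sys \<Rightarrow> real \<Rightarrow> ('n, 'v) vm list \<Rightarrow> bool" where
  "Inv s eps S \<longleftrightarrow> (\<forall>b\<in>set S. \<forall>(l, D)\<in>set (vm_jobs b). lmin s \<le> l \<and> in_range s eps (vm_range b) D)
     \<and> sorted_wrt (Rel s eps) S"

lemma in_range_facts:
  assumes "in_range s eps j D" "0 < lmin s" "0 < eps"
  shows "lmin s * (1 + eps) ^ j < mubar s" "1 / (mubar s - lmin s * (1 + eps) ^ j) \<le> D"
proof -
  have "(1 + eps) ^ j \<le> (1 + eps) ^ (j + 1)" using assms by (intro power_increasing) auto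
  hence "lmin s * (1 + eps) ^ j \<le> lmin s * (1 + eps) ^ (j + 1)" using assms by simp
  thus "lmin s * (1 + eps) ^ j < mubar s" using assms unfolding in_range_def by linarith
  show "1 / (mubar s - lmin s * (1 + eps) ^ j) \<le> D"
    using assms unfolding in_range_def by (cases "j = 0") auto
qed

lemma load_nonneg:
  assumes "\<forall>(l, D)\<in>set (vm_jobs b). lmin s \<le> l \<and> P D" "0 < lmin s"
  shows "0 \<le> vm_load b"
  unfolding vm_load_def
  by (rule sum_list_nonneg) (use assms in force)

lemma nonviable_bound:
  assumes nv: "\<not> viable s i v j lam D b"
    and bi: "vm_node b = i" "vm_vnf b = v" "vm_range b = j"
    and jr: "\<forall>(l, D')\<in>set (vm_jobs b). in_range s eps j D'"
    and dr: "in_range s eps j D"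
    and th: "0 < cplx s v" "cplx s v \<le> 1"
    and pos: "0 < lmin s" "0 < eps" "0 < lam" "0 \<le> vm_load b"
  shows "lmin s * (1 + eps) ^ j < vm_load b + lam"
proof (rule ccontr)
  assume "\<not> ?thesis"
  hence x: "vm_load b + lam \<le> lmin s * (1 + eps) ^ j" by simp
  define c where "c = lmin s * (1 + eps) ^ j"
  have cm: "c < mubar s" using in_range_facts[OF dr pos(1,2)] c_def by simp
  have "cplx s v * (vm_load b + lam) \<le> vm_load b + lam"
    using th pos by (simp add: mult_left_le_one_le)
  hence tx: "cplx s v * (vm_load b + lam) \<le> c" using x c_def by simp
  have den: "0 < mubar s - cplx s v * (vm_load b + lam)" using tx cm by simp
  have le: "1 / (mubar s - cplx s v * (vm_load b + lam)) \<le> 1 / (mubar s - c)"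
    using tx cm by (intro divide_left_mono) (auto intro: mult_pos_pos)
  have "\<And>D'. in_range s eps j D' \<Longrightarrow> 1 / (mubar s - cplx s v * (vm_load b + lam)) \<le> D'"
    using le in_range_facts(2)[OF _ pos(1,2)] c_def by (metis order_trans)
  hence "viable s i v j lam D b"
    unfolding viable_def using bi den dr jr by fast
  thus False using nv by simp
qed

lemma sorted_wrt_mono_list:
  assumes "sorted_wrt (Rel s eps) S" "length S' = length S"
    and "\<And>p. p < length S \<Longrightarrow> vm_node (S' ! p) = vm_node (S ! p) \<and> vm_vnf (S' ! p) = vm_vnf (S ! p)
         \<and> vm_range (S' ! p) = vm_range (S ! p) \<and> vm_load (S ! p) \<le> vm_load (S' ! p)"
  shows "sorted_wrt (Rel s eps) S'"
proof -
  have "\<And>p q. p < q \<Longrightarrow> q < length S \<Longrightarrow> Rel s eps (S' ! p) (S' ! q)"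
  proof -
    fix p q assume pq: "p < q" "q < length S"
    have "Rel s eps (S ! p) (S ! q)" using assms(1) pq by (simp add: sorted_wrt_iff_nth_less)
    moreover have "p < length S" using pq by simp
    ultimately show "Rel s eps (S' ! p) (S' ! q)"
      using assms(3)[of p] assms(3)[of q] pq unfolding Rel_def by fastforce
  qed
  thus ?thesis using assms(2) by (simp add: sorted_wrt_iff_nth_less)
qed

lemma load_add_job: "vm_load (add_job s lam D b) = vm_load b + lam"
  by (simp add: add_job_def vm_load_def Let_def)

lemma fields_add_job: "vm_node (add_job s lam D b) = vm_node b" "vm_vnf (add_job s lam D b) = vm_vnf b"
  "vm_range (add_job s lam D b) = vm_range b" "vm_jobs (add_job s lam D b) = vm_jobs b @ [(lam, D)]"
  by (simp_all add: add_job_def Let_def)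

lemma place_job_Inv:
  assumes "Inv s eps S" "place_job s S i v j lam D S'"
    and "in_range s eps j D" "lmin s \<le> lam" "0 < lmin s" "0 < eps"
    and "0 < cplx s v" "cplx s v \<le> 1"
  shows "Inv s eps S'"
  using assms(2) unfolding place_job_def
proof (elim disjE exE conjE)
  fix k assume k: "k < length S" and vk: "viable s i v j lam D (S ! k)"
    and S': "S' = S[k := add_job s lam D (S ! k)]"
  have rk: "vm_range (S ! k) = j" using vk by (simp add: viable_def)
  have A: "\<forall>b\<in>set S'. \<forall>(l, D')\<in>set (vm_jobs b). lmin s \<le> l \<and> in_range s eps (vm_range b) D'"
  proof
    fix b assume "b \<in> set S'"
    then obtain p where p: "p < length S" "b = S' ! p" using S' by (auto simp: in_set_conv_nth)
    show "\<forall>(l, D')\<in>set (vm_jobs b). lmin s \<le> l \<and> in_range s eps (vm_range b) D'"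
    proof (cases "p = k")
      case True
      have "S ! k \<in> set S" using k by simp
      thus ?thesis using assms(1,3,4) True p S' k rk unfolding Inv_def
        by (auto simp: fields_add_job)
    next
      case False
      have "S ! p \<in> set S" using p by simp
      thus ?thesis using assms(1) False p S' unfolding Inv_def by auto
    qed
  qed
  have B: "sorted_wrt (Rel s eps) S'"
    by (rule sorted_wrt_mono_list[where S=S]) (use assms(1,4,5) S' k in
        \<open>auto simp: Inv_def nth_list_update fields_add_job load_add_job\<close>)
  show ?thesis using A B by (simp add: Inv_def)
next
  assume nv: "\<forall>k<length S. \<not> viable s i v j lam D (S ! k)" and S': "S' = S @ [new_vm s i v j lam D]"
  have A: "\<forall>b\<in>set S'. \<forall>(l, D')\<in>set (vm_jobs b). lmin s \<le> l \<and> in_range s eps (vm_range b) D'"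
    using assms(1,3,4) S' by (auto simp: Inv_def new_vm_def)
  have "Rel s eps x (new_vm s i v j lam D)" if x: "x \<in> set S" for x
  proof -
    obtain p where p: "p < length S" "x = S ! p" using x by (auto simp: in_set_conv_nth)
    have jobs: "\<forall>(l, D')\<in>set (vm_jobs x). lmin s \<le> l \<and> in_range s eps (vm_range x) D'"
      using assms(1) x by (simp add: Inv_def)
    have ln: "0 \<le> vm_load x" by (rule load_nonneg[OF jobs assms(5)])
    show ?thesis unfolding Rel_def
    proof
      assume g: "vm_node x = vm_node (new_vm s i v j lam D) \<and> vm_vnf x = vm_vnf (new_vm s i v j lam D)
        \<and> vm_range x = vm_range (new_vm s i v j lam D)"
      hence g': "vm_node x = i" "vm_vnf x = v" "vm_range x = j" by (auto simp: new_vm_def)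
      have "lmin s * (1 + eps) ^ j < vm_load x + lam"
        by (rule nonviable_bound[where D=D and s=s and i=i and v=v and b=x])
           (use nv p g' jobs assms(3-8) ln in auto)
      thus "lmin s * (1 + eps) ^ vm_range (new_vm s i v j lam D) < vm_load x + vm_load (new_vm s i v j lam D)"
        by (simp add: new_vm_def vm_load_def)
    qed
  qed
  hence B: "sorted_wrt (Rel s eps) S'" using assms(1) S' by (simp add: Inv_def sorted_wrt_append)
  show ?thesis using A B by (simp add: Inv_def)
qed

lemma place_all_Inv:
  assumes "place_all s eps r i S vs S'" "Inv s eps S" "lmin s \<le> load r" "0 < lmin s" "0 < eps"
    and "\<And>v. 0 < cplx s v \<and> cplx s v \<le> 1"
  shows "Inv s eps S'"
  using assms
proof (induction rule: place_all.induct)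
  case (nil S) thus ?case by simp
next
  case (cons j v S S' vs S'')
  have "Inv s eps S'" by (rule place_job_Inv[OF cons.prems(1) cons.hyps(2) cons.hyps(1)]) (use cons.prems in auto)
  thus ?case using cons by blast
qed

lemma reach_Inv:
  assumes "reach s eps req n S" "\<And>k. lmin s \<le> load (req k)" "0 < lmin s" "0 < eps"
    and "\<And>v. 0 < cplx s v \<and> cplx s v \<le> 1"
  shows "Inv s eps S"
  using assms(1)
proof (induction rule: reach.induct)
  case init thus ?case by (simp add: Inv_def)
next
  case (step n S S')
  thus ?case using place_all_Inv assms(2-5) unfolding handle_def by metis
qed

lemma count_aux:
  fixes xs :: "real list"
  assumes "sorted_wrt (\<lambda>a b. c < a + b) xs" "\<forall>x\<in>set xs. 0 \<le> x" "xs \<noteq> []"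
  shows "\<exists>y\<in>set xs. (real (length xs) - 1) * c / 2 + min y (c / 2) \<le> sum_list xs"
  using assms
proof (induction xs)
  case Nil thus ?case by simp
next
  case (Cons x xs)
  show ?case
  proof (cases "xs = []")
    case True thus ?thesis by auto
  next
    case False
    then obtain y where y: "y \<in> set xs" "(real (length xs) - 1) * c / 2 + min y (c / 2) \<le> sum_list xs"
      using Cons by auto
    show ?thesis
    proof (cases "c / 2 \<le> x")
      case True
      have "(real (length (x # xs)) - 1) * c / 2 = (real (length xs) - 1) * c / 2 + c / 2" by (simp add: field_simps)
      hence "(real (length (x # xs)) - 1) * c / 2 + min y (c / 2) \<le> sum_list (x # xs)"
        using y(2) True by (simp only: sum_list.Cons)
      thus ?thesis using y(1) by auto
    next
      case False
      have "c / 2 < y" using Cons.prems(1) y(1) False by auto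
      hence "min y (c / 2) = c / 2" by simp
      hence "(real (length (x # xs)) - 1) * c / 2 + min x (c / 2) \<le> sum_list (x # xs)"
      proof -
        have e: "(real (length (x # xs)) - 1) * c / 2 = (real (length xs) - 1) * c / 2 + c / 2"
          by (simp add: field_simps)
        have "min x (c / 2) = x" using False by simp
        thus ?thesis using e y(2) \<open>min y (c / 2) = c / 2\<close> by (simp only: sum_list.Cons)
      qed
      thus ?thesis by auto
    qed
  qed
qed

lemma count_bound:
  fixes xs :: "real list"
  assumes "sorted_wrt (\<lambda>a b. c < a + b) xs" "\<forall>x\<in>set xs. 0 \<le> x" "0 < c"
  shows "real (length xs) \<le> 2 * sum_list xs / c + 1"
proof (cases "xs = []")
  case True thus ?thesis using assms by simp
next
  case False
  then obtain y where y: "y \<in> set xs" "(real (length xs) - 1) * c / 2 + min y (c / 2) \<le> sum_list xs"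
    using count_aux[OF assms(1,2)] by auto
  have "0 \<le> min y (c / 2)" using y assms by auto
  hence "(real (length xs) - 1) * c \<le> 2 * sum_list xs" using y by linarith
  hence "real (length xs) - 1 \<le> 2 * sum_list xs / c" using assms(3) by (simp add: field_simps)
  thus ?thesis by simp
qed

theorem lemma4:
  fixes s :: "('n, 'v) sys" and eps :: real and req :: "nat \<Rightarrow> 'v req"
  assumes "finite (nodes s)"
    and "strict_mono (fwd s)"
    and "\<And>v. 0 < cplx s v \<and> cplx s v \<le> 1"
    and "0 < mubar s"
    and "0 < eps"
    and "\<And>k. finite (vnfs (req k))"
    and "\<And>k. lmin s \<le> load (req k)"
    and "lmin s = (INF k. load (req k))"
    and "0 < lmin s"
    and "reach s eps req n S"
  shows "real (length (vms_of S i v j)) \<le> 2 * Lam S i v j / (lmin s * (1 + eps) ^ j) + 1"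
proof -
  have I: "Inv s eps S" by (rule reach_Inv[OF assms(10,7,9,5,3)])
  define F where "F = vms_of S i v j"
  have sF: "sorted_wrt (Rel s eps) F" using I unfolding F_def vms_of_def Inv_def
    by (simp add: sorted_wrt_filter)
  have "sorted_wrt (\<lambda>b b'. lmin s * (1 + eps) ^ j < vm_load b + vm_load b') F"
    by (rule sorted_wrt_mono_rel[OF _ sF]) (auto simp: F_def vms_of_def Rel_def)
  hence s2: "sorted_wrt (\<lambda>a b. lmin s * (1 + eps) ^ j < a + b) (map vm_load F)"
    by (simp add: sorted_wrt_map)
  have nn: "\<forall>x\<in>set (map vm_load F). 0 \<le> x"
  proof
    fix x assume "x \<in> set (map vm_load F)"
    then obtain b where b: "b \<in> set S" "x = vm_load b" by (auto simp: F_def vms_of_def)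
    show "0 \<le> x" using load_nonneg[of b s] I b assms(9) unfolding Inv_def by fast
  qed
  have "0 < lmin s * (1 + eps) ^ j" using assms(5,9) by simp
  from count_bound[OF s2 nn this] show ?thesis by (simp add: F_def Lam_def)
qed

end
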